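(* Let $(m_j)_{j=1}^{\infty}$ be a strictly increasing sequence of positive integers with $m_{j+1}\ge q\,m_j$ for all $j$, where $q\ge 3$. Let $A_j>0$, $B_j\in\mathbb{C}$ with $A_j^2-|B_j|^2=1$, and let $M,N\in\mathbb{N}$ with $M<N$. Define the trigonometric polynomial $b_{M,N}$ as the upper-right entry of $$\prod_{j=M+1}^{N}\begin{bmatrix} A_j & B_j e^{2\pi i m_j t}\\ \overline{B_j}e^{-2\pi i m_j t} & A_j\end{bmatrix}$$ (factors in increasing order of $j$ from left to right), and write $b_{M,N}(t)=\sum_{n\in F}D_n e^{2\pi i n t}$, where $F\subseteq\mathbb{Z}$ is the set of frequencies at which the Fourier coefficient $D_n$ of $b_{M,N}$ is nonzero. Then $$\sum_{n\in\mathbb{Z}}\Big|\sum_{\substack{n_1,n_2\in F\\ n_2-n_1=n}}D_{n_1}\overline{D_{n_2}}\Big|^2\le e^{8\sum_{j=M+1}^{N}|B_j|^2}.$$ *)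

theory Defs
  imports "HOL-Analysis.Analysis"
begin

text \<open>2x2 complex matrices as quadruples (a11, a12, a21, a22).\<close>
type_synonym m2 = "complex \<times> complex \<times> complex \<times> complex"

fun m2_mult :: "m2 \<Rightarrow> m2 \<Rightarrow> m2" where
  "m2_mult (a, b, c, d) (e, f, g, h) =
     (a * e + b * g, a * f + b * h, c * e + d * g, c * f + d * h)"

definition m2_id :: m2 where "m2_id = (1, 0, 0, 1)"

definition upper_right :: "m2 \<Rightarrow> complex" where
  "upper_right X = fst (snd X)"

fun ordered_prod :: "(nat \<Rightarrow> m2) \<Rightarrow> nat \<Rightarrow> nat \<Rightarrow> m2" where
  "ordered_prod P M 0 = m2_id"
| "ordered_prod P M (Suc n) =
     (if Suc n \<le> M then m2_id else m2_mult (ordered_prod P M n) (P (Suc n)))"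

definition factor :: "(nat \<Rightarrow> real) \<Rightarrow> (nat \<Rightarrow> complex) \<Rightarrow> (nat \<Rightarrow> nat) \<Rightarrow> real \<Rightarrow> nat \<Rightarrow> m2" where
  "factor A B m t j =
     (complex_of_real (A j),
      B j * exp (2 * pi * \<i> * of_nat (m j) * t),
      cnj (B j) * exp (- 2 * pi * \<i> * of_nat (m j) * t),
      complex_of_real (A j))"

definition bMN :: "(nat \<Rightarrow> real) \<Rightarrow> (nat \<Rightarrow> complex) \<Rightarrow> (nat \<Rightarrow> nat) \<Rightarrow> nat \<Rightarrow> nat \<Rightarrow> real \<Rightarrow> complex" where
  "bMN A B m M N t = upper_right (ordered_prod (factor A B m t) M N)"

definition fourier_coeff :: "(real \<Rightarrow> complex) \<Rightarrow> int \<Rightarrow> complex" where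
  "fourier_coeff f n = integral {0..1} (\<lambda>t. f t * exp (- 2 * pi * \<i> * of_int n * t))"

end

theory Submission
  imports Defs
begin

definition E :: "int \<Rightarrow> real \<Rightarrow> complex" where
  "E n t = exp (2 * pi * \<i> * of_int n * t)"

lemma E_deriv: "((E k) has_vector_derivative (2 * pi * \<i> * of_int k * E k t)) (at t within S)"
  unfolding E_def
  apply (rule has_vector_derivative_real_field)
  by (auto intro!: derivative_eq_intros)

lemma E_1: "E k 1 = 1" and E_0: "E k 0 = 1"
  unfolding E_def using exp_integer_2pi[of "of_int k"] 
  by (auto simp: mult_ac)

lemma E_zero[simp]: "E 0 t = 1" by (simp add: E_def)

lemma E_add: "E (a + b) t = E a t * E b t"
  unfolding E_def by (simp add: distrib_left distrib_right exp_add)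

lemma E_cnj: "cnj (E n t) = E (- n) t"
  unfolding E_def by (simp add: exp_cnj)

lemma E_integral: "((E k) has_integral (if k = 0 then 1 else 0)) {0..1}"
proof (cases "k = 0")
  case True
  have "E 0 = (\<lambda>_. 1)" by (rule ext) simp
  then show ?thesis using True has_integral_const_real[of "1::complex" 0 1] by simp
next
  case False
  let ?c = "2 * pi * \<i> * of_int k :: complex"
  have c: "?c \<noteq> 0" using False by simp
  have "((\<lambda>t. ?c * E k t / ?c) has_integral (E k 1 / ?c - E k 0 / ?c)) {0..1}"
    apply (rule fundamental_theorem_of_calculus)
     apply simp
    by (intro ballI has_vector_derivative_divide E_deriv)
  then show ?thesis using c False by (simp add: E_0 E_1)
qed

definition tp :: "int set \<Rightarrow> (real \<Rightarrow> complex) \<Rightarrow> bool" where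
  "tp S f \<longleftrightarrow> finite S \<and> (\<exists>c. \<forall>t. f t = (\<Sum>n\<in>S. c n * E n t))"

lemma tp_finite: "tp S f \<Longrightarrow> finite S" by (simp add: tp_def)

lemma tp_const: "tp {0} (\<lambda>t. c)"
  unfolding tp_def by (rule conjI, simp, rule exI[of _ "\<lambda>_. c"]) simp

lemma tp_E: "tp {n} (\<lambda>t. c * E n t)"
  unfolding tp_def by (rule conjI, simp, rule exI[of _ "\<lambda>_. c"]) simp

lemma tp_zero: "tp {} (\<lambda>t. 0)"
  unfolding tp_def by simp

lemma tp_mono: assumes "tp S f" "S \<subseteq> T" "finite T" shows "tp T f"
proof -
  obtain c where c: "\<And>t. f t = (\<Sum>n\<in>S. c n * E n t)" using assms(1) unfolding tp_def by blast
  have "f t = (\<Sum>n\<in>T. (if n \<in> S then c n else 0) * E n t)" for t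
    unfolding c using assms(2,3)
    by (intro sum.mono_neutral_cong_left) auto
  then show ?thesis using assms(3) unfolding tp_def by (intro conjI exI[where x="\<lambda>n. if n \<in> S then c n else 0"]) auto
qed

lemma tp_add: assumes "tp S f" "tp T g" shows "tp (S \<union> T) (\<lambda>t. f t + g t)"
proof -
  have fin: "finite (S \<union> T)" using assms by (simp add: tp_def)
  obtain c where c: "\<And>t. f t = (\<Sum>n\<in>S \<union> T. c n * E n t)" using tp_mono[OF assms(1) _ fin] unfolding tp_def by blast
  obtain d where d: "\<And>t. g t = (\<Sum>n\<in>S \<union> T. d n * E n t)" using tp_mono[OF assms(2) _ fin] unfolding tp_def by blast
  have "f t + g t = (\<Sum>n\<in>S \<union> T. (c n + d n) * E n t)" for t
    unfolding c d by (simp add: sum.distrib distrib_right)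
  then show ?thesis using fin unfolding tp_def by (intro conjI exI[where x="\<lambda>n. c n + d n"]) auto
qed

lemma tp_scale: assumes "tp S f" shows "tp S (\<lambda>t. k * f t)"
proof -
  obtain c where c: "\<And>t. f t = (\<Sum>n\<in>S. c n * E n t)" using assms unfolding tp_def by blast
  have "k * f t = (\<Sum>n\<in>S. (k * c n) * E n t)" for t
    unfolding c by (simp add: sum_distrib_left mult.assoc)
  then show ?thesis using assms unfolding tp_def by (intro conjI exI[where x="\<lambda>n. k * c n"]) auto
qed

definition msum :: "int set \<Rightarrow> int set \<Rightarrow> int set" where
  "msum S T = (\<lambda>(x, y). x + y) ` (S \<times> T)"

lemma msum_iff: "z \<in> msum S T \<longleftrightarrow> (\<exists>x\<in>S. \<exists>y\<in>T. z = x + y)"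
  unfolding msum_def by auto

lemma tp_mult: assumes "tp S f" "tp T g" shows "tp (msum S T) (\<lambda>t. f t * g t)"
proof -
  have fS: "finite S" and fT: "finite T" using assms by (auto simp: tp_def)
  obtain c where c: "\<And>t. f t = (\<Sum>n\<in>S. c n * E n t)" using assms(1) unfolding tp_def by blast
  obtain d where d: "\<And>t. g t = (\<Sum>n\<in>T. d n * E n t)" using assms(2) unfolding tp_def by blast
  let ?h = "\<lambda>p::int\<times>int. fst p + snd p"
  define e where "e s = (\<Sum>p\<in>{p\<in>S \<times> T. ?h p = s}. c (fst p) * d (snd p))" for s
  have "f t * g t = (\<Sum>s\<in>msum S T. e s * E s t)" for t
  proof -
    have "f t * g t = (\<Sum>x\<in>S. \<Sum>y\<in>T. (c x * E x t) * (d y * E y t))"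
      unfolding c d by (rule sum_product)
    also have "\<dots> = (\<Sum>p\<in>S \<times> T. (c (fst p) * d (snd p)) * E (?h p) t)"
      by (subst sum.cartesian_product) (auto simp: E_add mult_ac intro!: sum.cong)
    also have "\<dots> = (\<Sum>s\<in>?h ` (S \<times> T). \<Sum>p\<in>{p\<in>S \<times> T. ?h p = s}. (c (fst p) * d (snd p)) * E (?h p) t)"
      by (rule sum.image_gen) (use fS fT in auto)
    also have "\<dots> = (\<Sum>s\<in>msum S T. e s * E s t)"
      unfolding e_def msum_def sum_distrib_right
      by (auto intro!: sum.cong simp: case_prod_beta)
    finally show ?thesis .
  qed
  moreover have "finite (msum S T)" unfolding msum_def using fS fT by simp
  ultimately show ?thesis unfolding tp_def by blast
qed

lemma tp_cnj: assumes "tp S f" shows "tp (uminus ` S) (\<lambda>t. cnj (f t))"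
proof -
  obtain c where c: "\<And>t. f t = (\<Sum>n\<in>S. c n * E n t)" using assms unfolding tp_def by blast
  have "cnj (f t) = (\<Sum>n\<in>uminus ` S. cnj (c (- n)) * E n t)" for t
    unfolding c by (subst sum.reindex) (auto simp: inj_on_def E_cnj)
  then show ?thesis using assms unfolding tp_def by auto
qed

lemma cont_E: "continuous_on UNIV (E n)"
  unfolding E_def by (intro continuous_intros)

lemma tp_cont: assumes "tp S f" shows "continuous_on UNIV f"
proof -
  obtain c where c: "\<And>t. f t = (\<Sum>n\<in>S. c n * E n t)" using assms unfolding tp_def by blast
  have "f = (\<lambda>t. \<Sum>n\<in>S. c n * E n t)" using c by auto
  then show ?thesis using cont_E by (auto intro!: continuous_intros)
qed

lemma tp_integral: assumes "tp S f" "0 \<notin> S" shows "(f has_integral 0) {0..1}"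
proof -
  obtain c where c: "\<And>t. f t = (\<Sum>n\<in>S. c n * E n t)" using assms unfolding tp_def by blast
  have f: "f = (\<lambda>t. \<Sum>n\<in>S. c n * E n t)" using c by auto
  have "((\<lambda>t. \<Sum>n\<in>S. c n * E n t) has_integral (\<Sum>n\<in>S. c n * 0)) {0..1}"
    apply (rule has_integral_sum)
    using assms tp_finite apply blast
    subgoal for n using has_integral_mult_right[OF E_integral[of n], of "c n"] assms(2) by (auto split: if_splits)
    done
  then show ?thesis using f by simp
qed

lemma parseval:
  assumes "finite S"
  shows "((\<lambda>t. (\<Sum>n\<in>S. c n * E n t) * cnj (\<Sum>n\<in>S. c n * E n t)) has_integral (\<Sum>n\<in>S. c n * cnj (c n))) {0..1}"
proof -
  have eq: "(\<Sum>n\<in>S. c n * E n t) * cnj (\<Sum>n\<in>S. c n * E n t) = (\<Sum>x\<in>S. \<Sum>y\<in>S. (c x * cnj (c y)) * E (x - y) t)" for t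
    by (simp add: sum_product E_cnj[symmetric] mult_ac E_add[of _ "- _", simplified] sum_distrib_left; rule sum.swap)
  have "((\<lambda>t. \<Sum>x\<in>S. \<Sum>y\<in>S. (c x * cnj (c y)) * E (x - y) t) has_integral
        (\<Sum>x\<in>S. \<Sum>y\<in>S. (c x * cnj (c y)) * (if x - y = 0 then 1 else 0))) {0..1}"
    by (intro has_integral_sum assms has_integral_mult_right E_integral)
  also have "(\<Sum>x\<in>S. \<Sum>y\<in>S. (c x * cnj (c y)) * (if x - y = 0 then 1 else 0)) = (\<Sum>n\<in>S. c n * cnj (c n))"
    using assms by (simp add: if_distrib cong: if_cong)
  finally show ?thesis unfolding eq .
qed



lemma op_id: "k \<le> M \<Longrightarrow> ordered_prod P M k = m2_id"
  by (induction k) auto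

lemma op_Suc: "M \<le> k \<Longrightarrow> ordered_prod P M (Suc k) = m2_mult (ordered_prod P M k) (P (Suc k))"
  by simp

lemma factor_eq: "factor A B m t j =
  (of_real (A j), B j * E (int (m j)) t, cnj (B j * E (int (m j)) t), of_real (A j))"
  unfolding factor_def E_def by (simp add: exp_cnj)

definition ga where "ga A B m M k t = fst (ordered_prod (factor A B m t) M k)"
definition gb where "gb A B m M k t = fst (snd (ordered_prod (factor A B m t) M k))"

lemma op_struct: "ordered_prod (factor A B m t) M k =
   (ga A B m M k t, gb A B m M k t, cnj (gb A B m M k t), cnj (ga A B m M k t))"
proof (induction k)
  case 0
  then show ?case by (simp add: ga_def gb_def m2_id_def)
next
  case (Suc k)
  show ?case
  proof (cases "Suc k \<le> M")
    case True
    then show ?thesis by (simp add: ga_def gb_def m2_id_def)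
  next
    case False
    then have eq: "ordered_prod (factor A B m t) M (Suc k) = m2_mult (ordered_prod (factor A B m t) M k) (factor A B m t (Suc k))" by simp
    show ?thesis unfolding eq Suc.IH unfolding factor_eq
      using False by (simp add: ga_def[of _ _ _ _ "Suc k"] gb_def[of _ _ _ _ "Suc k"] eq Suc.IH factor_eq)
  qed
qed

lemma ga_M: "ga A B m M M t = 1" and gb_M: "gb A B m M M t = 0"
  by (simp_all add: ga_def gb_def op_id m2_id_def)

lemma ga_Suc: "M \<le> k \<Longrightarrow> ga A B m M (Suc k) t =
   of_real (A (Suc k)) * ga A B m M k t + cnj (B (Suc k)) * (gb A B m M k t * E (- int (m (Suc k))) t)"
  using op_struct[of A B m t M k]
  by (simp add: ga_def[of _ _ _ _ "Suc k"] op_Suc factor_eq E_cnj mult_ac)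

lemma gb_Suc: "M \<le> k \<Longrightarrow> gb A B m M (Suc k) t =
   B (Suc k) * (ga A B m M k t * E (int (m (Suc k))) t) + of_real (A (Suc k)) * gb A B m M k t"
  using op_struct[of A B m t M k]
  by (simp add: gb_def[of _ _ _ _ "Suc k"] op_Suc factor_eq E_cnj mult_ac)

lemma tp_E1: "tp {n} (E n)"
  using tp_E[of n 1] by simp

lemma freq:
  assumes m3: "\<And>j. j \<ge> 1 \<Longrightarrow> 3 * m j \<le> m (Suc j)" and mpos: "m (Suc M) > 0"
    and "M \<le> k"
  shows "\<exists>Sa Sb. tp Sa (ga A B m M k) \<and> tp Sb (gb A B m M k) \<and>
     (\<forall>f\<in>Sa. f \<le> 0 \<and> 3 * (- f) < int (m (Suc k))) \<and> (\<forall>f\<in>Sb. 0 < f \<and> 3 * f \<le> int (m (Suc k)))"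
  using assms(3)
proof (induction k rule: dec_induct)
  case base
  have "ga A B m M M = (\<lambda>t. 1)" "gb A B m M M = (\<lambda>t. 0)" by (auto simp: ga_M gb_M)
  then show ?case using tp_const[of 1] tp_zero mpos by (intro exI[of _ "{0}"] exI[of _ "{}"]) auto
next
  case (step k)
  then obtain Sa Sb where a: "tp Sa (ga A B m M k)" and b: "tp Sb (gb A B m M k)"
    and ca: "\<forall>f\<in>Sa. f \<le> 0 \<and> 3 * (- f) < int (m (Suc k))"
    and cb: "\<forall>f\<in>Sb. 0 < f \<and> 3 * f \<le> int (m (Suc k))" by blast
  let ?m = "int (m (Suc k))"
  have m3': "3 * ?m \<le> int (m (Suc (Suc k)))" using m3[of "Suc k"] by simp
  have ea: "ga A B m M (Suc k) = (\<lambda>t. of_real (A (Suc k)) * ga A B m M k t + cnj (B (Suc k)) * (gb A B m M k t * E (- ?m) t))"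
    using ga_Suc[OF step(1)] by auto
  have eb: "gb A B m M (Suc k) = (\<lambda>t. B (Suc k) * (ga A B m M k t * E ?m t) + of_real (A (Suc k)) * gb A B m M k t)"
    using gb_Suc[OF step(1)] by auto
  have ta: "tp (Sa \<union> msum Sb {- ?m}) (ga A B m M (Suc k))"
    unfolding ea by (intro tp_add tp_scale tp_mult a b tp_E1)
  have tb: "tp (msum Sa {?m} \<union> Sb) (gb A B m M (Suc k))"
    unfolding eb by (intro tp_add tp_scale tp_mult a b tp_E1)
  show ?case
    apply (rule exI[of _ "Sa \<union> msum Sb {- ?m}"], rule exI[of _ "msum Sa {?m} \<union> Sb"])
    using ta tb apply simp
    using m3' by (auto simp: msum_iff dest!: bspec[OF ca] bspec[OF cb])
qed



lemma E_norm: "E n t * cnj (E n t) = 1"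
  by (simp add: E_cnj E_add[symmetric])

lemma cmod_E: "cmod (E n t) = 1"
  unfolding E_def by (simp add: norm_exp_eq_Re)

lemma alg:
  fixes a b e B A :: complex
  assumes "e * cnj e = 1" "cnj A = A"
  shows "(A*a + cnj B*(b*cnj e)) * cnj(A*a + cnj B*(b*cnj e)) + (B*(a*e) + A*b) * cnj (B*(a*e) + A*b)
   = (A^2 + B*cnj B) * (a*cnj a + b*cnj b) + 2*A*(B*e*a*cnj b + cnj(B*e*a*cnj b))"
proof -
  have "(A*a + cnj B*(b*cnj e)) * cnj(A*a + cnj B*(b*cnj e)) + (B*(a*e) + A*b) * cnj (B*(a*e) + A*b)
     - ((A^2 + B*cnj B) * (a*cnj a + b*cnj b) + 2*A*(B*e*a*cnj b + cnj(B*e*a*cnj b)))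
     = (e * cnj e - 1) * (B * cnj B * (a*cnj a + b*cnj b))"
    by (simp add: algebra_simps power2_eq_square assms(2))
  then show ?thesis using assms(1) by simp
qed

lemma norm_sq_of_real: "complex_of_real ((cmod z)^2) = z * cnj z"
  by (rule complex_norm_square)

definition UU where "UU A B m M k t = (cmod (ga A B m M k t))^2 + (cmod (gb A B m M k t))^2"

lemma step_pointwise:
  fixes m :: "nat \<Rightarrow> nat" and t :: real
  assumes "M \<le> k" and AB: "(A (Suc k))\<^sup>2 - (cmod (B (Suc k)))\<^sup>2 = 1"
  defines "\<beta> \<equiv> (cmod (B (Suc k)))\<^sup>2"
  defines "X \<equiv> B (Suc k) * E (int (m (Suc k))) t * ga A B m M k t * cnj (gb A B m M k t)"
  shows "UU A B m M (Suc k) t = (1 + 2*\<beta>) * UU A B m M k t + 4 * A (Suc k) * Re X"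
proof -
  let ?a = "ga A B m M k t" and ?b = "gb A B m M k t" and ?e = "E (int (m (Suc k))) t"
  have e: "?e * cnj ?e = 1" by (rule E_norm)
  have "complex_of_real (UU A B m M (Suc k) t) =
     (of_real (A (Suc k)) * ?a + cnj (B (Suc k)) * (?b * cnj ?e)) * cnj (of_real (A (Suc k)) * ?a + cnj (B (Suc k)) * (?b * cnj ?e))
     + (B (Suc k) * (?a * ?e) + of_real (A (Suc k)) * ?b) * cnj (B (Suc k) * (?a * ?e) + of_real (A (Suc k)) * ?b)"
    unfolding UU_def of_real_add norm_sq_of_real ga_Suc[OF assms(1)] gb_Suc[OF assms(1)] E_cnj by simp
  also have "\<dots> = (of_real (A (Suc k))^2 + B (Suc k) * cnj (B (Suc k))) * (?a * cnj ?a + ?b * cnj ?b) + 2 * of_real (A (Suc k)) * (X + cnj X)"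
    unfolding X_def by (rule alg[OF e]) simp
  also have "\<dots> = complex_of_real ((1 + 2*\<beta>) * UU A B m M k t + 4 * A (Suc k) * Re X)"
  proof -
    have "(A (Suc k))^2 = 1 + \<beta>" using AB unfolding \<beta>_def by simp
    moreover have "B (Suc k) * cnj (B (Suc k)) = of_real \<beta>" unfolding \<beta>_def by (rule complex_norm_square[symmetric])
    moreover have "?a * cnj ?a + ?b * cnj ?b = of_real (UU A B m M k t)" unfolding UU_def of_real_add complex_norm_square ..
    moreover have "X + cnj X = of_real (2 * Re X)" by (simp add: complex_add_cnj)
    ultimately show ?thesis
      by (simp flip: of_real_power add: algebra_simps) 
  qed
  finally show ?thesis using of_real_eq_iff by blast
qed

lemma step_sq:
  fixes m :: "nat \<Rightarrow> nat" and t :: real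
  assumes "M \<le> k" and AB: "(A (Suc k))\<^sup>2 - (cmod (B (Suc k)))\<^sup>2 = 1"
  defines "\<beta> \<equiv> (cmod (B (Suc k)))\<^sup>2"
  defines "X \<equiv> B (Suc k) * E (int (m (Suc k))) t * ga A B m M k t * cnj (gb A B m M k t)"
  shows "(UU A B m M (Suc k) t)^2 = (1 + 2*\<beta>)^2 * (UU A B m M k t)^2
     + 8 * (A (Suc k))^2 * \<beta> * (cmod (ga A B m M k t) * cmod (gb A B m M k t))^2
     + 8 * (1 + 2*\<beta>) * A (Suc k) * Re (of_real (UU A B m M k t) * X)
     + 8 * (A (Suc k))^2 * Re (X^2)"
proof -
  define r where "r = Re X"
  define s where "s = Im X"
  define U where "U = UU A B m M k t"
  define P where "P = (cmod (ga A B m M k t) * cmod (gb A B m M k t))^2"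
  have h1: "UU A B m M (Suc k) t = (1 + 2*\<beta>) * U + 4 * A (Suc k) * r"
    using step_pointwise[where m=m and t=t and A=A and B=B and M=M and k=k, OF assms(1,2)] unfolding \<beta>_def X_def r_def U_def by simp
  have "cmod X = cmod (B (Suc k)) * (cmod (ga A B m M k t) * cmod (gb A B m M k t))"
    unfolding X_def by (simp add: norm_mult cmod_E)
  then have "(cmod X)^2 = \<beta> * P" unfolding \<beta>_def P_def by (simp add: power_mult_distrib)
  then have h2: "\<beta> * P = r^2 + s^2" unfolding r_def s_def by (simp add: cmod_power2)
  have h3: "Re (of_real U * X) = U * r" unfolding r_def by simp
  have h4: "Re (X^2) = r^2 - s^2" unfolding r_def s_def by (simp add: power2_eq_square)
  have "8 * (A (Suc k))^2 * \<beta> * P = 8 * (A (Suc k))^2 * (r^2 + s^2)" using h2 by simp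
  then show ?thesis unfolding h1 U_def[symmetric] P_def[symmetric] h3 h4
    by (simp add: power2_eq_square algebra_simps)
qed

lemma amgm: "(x * y)^2 * 4 \<le> ((x::real)^2 + y^2)^2"
proof -
  have "0 \<le> (x^2 - y^2)^2" by simp
  then show ?thesis by (simp add: power2_eq_square algebra_simps)
qed

lemma exp_bound: assumes "0 \<le> (b::real)" shows "(1 + 2*b)^2 + 2*(1+b)*b \<le> exp (8*b)"
proof -
  have "1 + 4*b \<le> exp (4*b)" by (rule exp_ge_add_one_self)
  then have "(1 + 4*b) * (1 + 4*b) \<le> exp (4*b) * exp (4*b)"
    using assms by (intro mult_mono) auto
  also have "\<dots> = exp (8*b)" by (simp flip: exp_add)
  finally have h: "(1 + 4*b) * (1 + 4*b) \<le> exp (8*b)" .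
  have "(1 + 4*b) * (1 + 4*b) - ((1 + 2*b)^2 + 2*(1+b)*b) = 2*b + 10*(b*b)"
    by (simp add: power2_eq_square algebra_simps)
  moreover have "0 \<le> b*b" by simp
  ultimately show ?thesis using h assms by linarith
qed

lemma ga_cont: assumes "tp S (ga A B m M k)" shows "continuous_on {0..1} (ga A B m M k)"
  using tp_cont[OF assms] continuous_on_subset by blast



lemma Re_has_integral0: "(g has_integral 0) S \<Longrightarrow> ((\<lambda>t. Re (g t)) has_integral 0) S"
  using has_integral_linear[OF _ bounded_linear_Re, of g 0 S] by (simp add: comp_def)

lemma step_int:
  fixes m :: "nat \<Rightarrow> nat"
  assumes m3: "\<And>j. j \<ge> 1 \<Longrightarrow> 3 * m j \<le> m (Suc j)" and mpos: "m (Suc M) > 0"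
    and k: "M \<le> k" and AB: "(A (Suc k))\<^sup>2 - (cmod (B (Suc k)))\<^sup>2 = 1"
  shows "integral {0..1} (\<lambda>t. (UU A B m M (Suc k) t)^2)
     \<le> exp (8 * (cmod (B (Suc k)))\<^sup>2) * integral {0..1} (\<lambda>t. (UU A B m M k t)^2)"
proof -
  define \<beta> where "\<beta> = (cmod (B (Suc k)))\<^sup>2"
  let ?a = "ga A B m M k" and ?b = "gb A B m M k"
  let ?m = "int (m (Suc k))"
  obtain Sa Sb where a: "tp Sa ?a" and b: "tp Sb ?b"
    and ca: "\<forall>f\<in>Sa. f \<le> 0 \<and> 3 * (- f) < ?m"
    and cb: "\<forall>f\<in>Sb. 0 < f \<and> 3 * f \<le> ?m"
    using freq[OF m3 mpos k, of A B] by blast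
  define Xf where "Xf t = B (Suc k) * ((E ?m t * ?a t) * cnj (?b t))" for t
  have Xf_eq: "Xf t = B (Suc k) * E ?m t * ?a t * cnj (?b t)" for t
    unfolding Xf_def by (simp add: mult_ac)
  define SU where "SU = msum Sa (uminus ` Sa) \<union> msum Sb (uminus ` Sb)"
  define SX where "SX = msum (msum {?m} Sa) (uminus ` Sb)"
  have tU: "tp SU (\<lambda>t. of_real (UU A B m M k t))"
  proof -
    have "(\<lambda>t. of_real (UU A B m M k t)) = (\<lambda>t. ?a t * cnj (?a t) + ?b t * cnj (?b t))"
      unfolding UU_def of_real_add complex_norm_square by simp
    then show ?thesis unfolding SU_def by (simp add: tp_add tp_mult tp_cnj a b)
  qed
  have tX: "tp SX Xf"
    unfolding SX_def Xf_def by (intro tp_scale tp_mult tp_E1 a b tp_cnj)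
  have SU_b: "\<forall>u\<in>SU. - ?m < 3 * u"
    unfolding SU_def using ca cb by (auto simp: msum_iff dest!: bspec[OF ca] bspec[OF cb])
  have SX_b: "\<forall>x\<in>SX. ?m < 3 * x"
    unfolding SX_def using ca cb by (auto simp: msum_iff dest!: bspec[OF ca] bspec[OF cb])
  have t1: "tp (msum SU SX) (\<lambda>t. of_real (UU A B m M k t) * Xf t)" by (rule tp_mult[OF tU tX])
  have t2: "tp (msum SX SX) (\<lambda>t. Xf t * Xf t)" by (rule tp_mult[OF tX tX])
  have z1: "0 \<notin> msum SU SX" using SU_b SX_b by (auto simp: msum_iff dest!: bspec[OF SU_b] bspec[OF SX_b])
  have z2: "0 \<notin> msum SX SX" using SX_b by (auto simp: msum_iff dest!: bspec[OF SX_b])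
  have i1: "((\<lambda>t. Re (of_real (UU A B m M k t) * Xf t)) has_integral 0) {0..1}"
    by (rule Re_has_integral0[OF tp_integral[OF t1 z1]])
  have i2: "((\<lambda>t. Re ((Xf t)^2)) has_integral 0) {0..1}"
    using Re_has_integral0[OF tp_integral[OF t2 z2]] by (simp add: power2_eq_square)
  have ca': "continuous_on {0..1} ?a" by (rule ga_cont[OF a])
  have cb': "continuous_on {0..1} ?b" using tp_cont[OF b] continuous_on_subset by blast
  have cU: "continuous_on {0..1} (\<lambda>t. (UU A B m M k t)^2)"
    unfolding UU_def using ca' cb' by (intro continuous_intros)
  have cP: "continuous_on {0..1} (\<lambda>t. (cmod (?a t) * cmod (?b t))^2)"
    using ca' cb' by (intro continuous_intros)
  define I where "I = integral {0..1} (\<lambda>t. (UU A B m M k t)^2)"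
  define J where "J = integral {0..1} (\<lambda>t. (cmod (?a t) * cmod (?b t))^2)"
  have iU: "((\<lambda>t. (UU A B m M k t)^2) has_integral I) {0..1}"
    unfolding I_def by (rule integrable_integral[OF integrable_continuous_interval[OF cU]])
  have iP: "((\<lambda>t. (cmod (?a t) * cmod (?b t))^2) has_integral J) {0..1}"
    unfolding J_def by (rule integrable_integral[OF integrable_continuous_interval[OF cP]])
  have eq: "(\<lambda>t. (UU A B m M (Suc k) t)^2) = (\<lambda>t. (1 + 2*\<beta>)^2 * (UU A B m M k t)^2
     + 8 * (A (Suc k))^2 * \<beta> * (cmod (?a t) * cmod (?b t))^2
     + 8 * (1 + 2*\<beta>) * A (Suc k) * Re (of_real (UU A B m M k t) * Xf t)
     + 8 * (A (Suc k))^2 * Re ((Xf t)^2))"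
    unfolding Xf_eq \<beta>_def by (rule ext, rule step_sq[where m=m and A=A and B=B and M=M and k=k, OF k AB])
  have "((\<lambda>t. (UU A B m M (Suc k) t)^2) has_integral
      ((1 + 2*\<beta>)^2 * I + 8 * (A (Suc k))^2 * \<beta> * J + 8 * (1 + 2*\<beta>) * A (Suc k) * 0 + 8 * (A (Suc k))^2 * 0)) {0..1}"
    unfolding eq
    by (intro has_integral_add has_integral_mult_right iU iP i1 i2)
  then have I': "integral {0..1} (\<lambda>t. (UU A B m M (Suc k) t)^2) = (1 + 2*\<beta>)^2 * I + 8 * (A (Suc k))^2 * \<beta> * J"
    by (simp add: integral_unique)
  have JI: "J \<le> I / 4"
  proof -
    have "J \<le> integral {0..1} (\<lambda>t. (UU A B m M k t)^2 / 4)"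
      unfolding J_def UU_def
      by (rule integral_le) (use integrable_continuous_interval[OF cP] integrable_continuous_interval[OF cU] in
          \<open>auto simp: UU_def intro: amgm integrable_on_divide\<close>)
    also have "\<dots> = I / 4" unfolding I_def by simp
    finally show ?thesis .
  qed
  have I0: "0 \<le> I" unfolding I_def
    by (rule integral_nonneg[OF integrable_continuous_interval[OF cU]]) simp
  have b0: "0 \<le> \<beta>" unfolding \<beta>_def by simp
  have A2: "(A (Suc k))^2 = 1 + \<beta>" using AB unfolding \<beta>_def by simp
  have "8 * (A (Suc k))^2 * \<beta> * J \<le> 8 * (A (Suc k))^2 * \<beta> * (I / 4)"
    using JI b0 by (intro mult_left_mono) auto
  then have "integral {0..1} (\<lambda>t. (UU A B m M (Suc k) t)^2) \<le> ((1 + 2*\<beta>)^2 + 2*(1+\<beta>)*\<beta>) * I"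
    unfolding I' A2 by (simp add: algebra_simps)
  also have "\<dots> \<le> exp (8*\<beta>) * I"
    using exp_bound[OF b0] I0 by (rule mult_right_mono)
  finally show ?thesis unfolding \<beta>_def I_def .
qed



lemma UU_M: "UU A B m M M t = 1"
  by (simp add: UU_def ga_M gb_M)

lemma chain:
  fixes m :: "nat \<Rightarrow> nat"
  assumes m3: "\<And>j. j \<ge> 1 \<Longrightarrow> 3 * m j \<le> m (Suc j)" and mpos: "m (Suc M) > 0"
    and AB: "\<And>j. j \<ge> 1 \<Longrightarrow> (A j)\<^sup>2 - (cmod (B j))\<^sup>2 = 1"
  shows "integral {0..1} (\<lambda>t. (UU A B m M (M + d) t)^2) \<le> exp (8 * (\<Sum>j = M + 1..M + d. (cmod (B j))\<^sup>2))"
proof (induction d)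
  case 0
  then show ?case by (simp add: UU_M)
next
  case (Suc d)
  have "integral {0..1} (\<lambda>t. (UU A B m M (Suc (M + d)) t)^2)
     \<le> exp (8 * (cmod (B (Suc (M + d))))\<^sup>2) * integral {0..1} (\<lambda>t. (UU A B m M (M + d) t)^2)"
    by (rule step_int[OF m3 mpos]) (use AB in auto)
  also have "\<dots> \<le> exp (8 * (cmod (B (Suc (M + d))))\<^sup>2) * exp (8 * (\<Sum>j = M + 1..M + d. (cmod (B j))\<^sup>2))"
    by (rule mult_left_mono[OF Suc.IH]) simp
  also have "\<dots> = exp (8 * (\<Sum>j = M + 1..M + Suc d. (cmod (B j))\<^sup>2))"
    by (simp add: sum.cl_ivl_Suc distrib_left exp_add[symmetric] add_ac)
  finally show ?case by simp
qed



lemma fourier_tp: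
  assumes "finite S" "\<And>t. f t = (\<Sum>k\<in>S. c k * E k t)"
  shows "fourier_coeff f n = (if n \<in> S then c n else 0)"
proof -
  have eq: "f t * exp (- 2 * pi * \<i> * of_int n * t) = (\<Sum>k\<in>S. c k * E (k - n) t)" for t
  proof -
    have "exp (- 2 * pi * \<i> * of_int n * t) = E (- n) t" by (simp add: E_def)
    then show ?thesis unfolding assms(2) by (simp add: sum_distrib_right E_add[symmetric] mult.assoc)
  qed
  have "((\<lambda>t. \<Sum>k\<in>S. c k * E (k - n) t) has_integral (\<Sum>k\<in>S. c k * (if k - n = 0 then 1 else 0))) {0..1}"
    by (intro has_integral_sum assms has_integral_mult_right E_integral)
  also have "(\<Sum>k\<in>S. c k * (if k - n = 0 then 1 else 0)) = (if n \<in> S then c n else 0)"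
    using assms(1) by (simp add: if_distrib cong: if_cong)
  finally show ?thesis unfolding fourier_coeff_def eq by (rule integral_unique)
qed

theorem lemma3p2:
  fixes m :: "nat \<Rightarrow> nat" and q :: real
    and A :: "nat \<Rightarrow> real" and B :: "nat \<Rightarrow> complex" and M N :: nat
  assumes q: "q \<ge> 3"
    and m_pos: "\<And>j. j \<ge> 1 \<Longrightarrow> m j > 0"
    and m_strict: "\<And>j. j \<ge> 1 \<Longrightarrow> m j < m (Suc j)"
    and m_lacunary: "\<And>j. j \<ge> 1 \<Longrightarrow> real (m (Suc j)) \<ge> q * real (m j)"
    and A_pos: "\<And>j. j \<ge> 1 \<Longrightarrow> A j > 0"
    and AB: "\<And>j. j \<ge> 1 \<Longrightarrow> (A j)\<^sup>2 - (cmod (B j))\<^sup>2 = 1"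
    and MN: "M < N"
  defines "D \<equiv> fourier_coeff (bMN A B m M N)"
  defines "F \<equiv> {n. D n \<noteq> 0}"
  shows "(\<Sum>\<^sub>\<infinity> n::int. (cmod (\<Sum>(n1, n2) \<in> {(n1, n2). n1 \<in> F \<and> n2 \<in> F \<and> n2 - n1 = n}.
              D n1 * cnj (D n2)))\<^sup>2)
         \<le> exp (8 * (\<Sum>j = M + 1..N. (cmod (B j))\<^sup>2))"
proof -
  have m3: "3 * m j \<le> m (Suc j)" if "j \<ge> 1" for j
  proof -
    have "3 * real (m j) \<le> q * real (m j)" using q by (intro mult_right_mono) auto
    also have "\<dots> \<le> real (m (Suc j))" using m_lacunary[OF that] .
    finally show ?thesis by linarith
  qed
  have mpos: "m (Suc M) > 0" using m_pos by simp
  let ?b = "gb A B m M N"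
  have bMN: "bMN A B m M N = ?b" by (rule ext) (simp add: bMN_def upper_right_def gb_def)
  obtain Sa Sb where ta: "tp Sa (ga A B m M N)" and tb: "tp Sb ?b"
    using freq[OF m3 mpos, of N A B] MN by auto
  obtain c where c: "\<And>t. ?b t = (\<Sum>k\<in>Sb. c k * E k t)" and fSb: "finite Sb"
    using tb unfolding tp_def by blast
  have Dn: "D n = (if n \<in> Sb then c n else 0)" for n
    unfolding D_def bMN by (rule fourier_tp[OF fSb c])
  have FS: "F \<subseteq> Sb" unfolding F_def using Dn by auto
  have fF: "finite F" using FS fSb finite_subset by blast
  have bF: "?b t = (\<Sum>n\<in>F. D n * E n t)" for t
  proof -
    have "?b t = (\<Sum>n\<in>Sb. D n * E n t)" unfolding c Dn by (intro sum.cong) auto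
    also have "\<dots> = (\<Sum>n\<in>F. D n * E n t)"
      by (rule sum.mono_neutral_right[OF fSb FS]) (auto simp: F_def)
    finally show ?thesis .
  qed
  define h where "h = (\<lambda>p::int\<times>int. fst p - snd p)"
  define e where "e d = (\<Sum>p\<in>{p\<in>F \<times> F. h p = d}. D (fst p) * cnj (D (snd p)))" for d
  define DS where "DS = h ` (F \<times> F)"
  have fDS: "finite DS" unfolding DS_def using fF by simp
  have g: "?b t * cnj (?b t) = (\<Sum>d\<in>DS. e d * E d t)" for t
  proof -
    have "?b t * cnj (?b t) = (\<Sum>x\<in>F. \<Sum>y\<in>F. (D x * E x t) * cnj (D y * E y t))"
      unfolding bF by (simp add: sum_product)
    also have "\<dots> = (\<Sum>p\<in>F \<times> F. (D (fst p) * cnj (D (snd p))) * E (h p) t)"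
      unfolding h_def
      by (subst sum.cartesian_product) (auto simp: E_add[of _ "- _", simplified] E_cnj mult_ac intro!: sum.cong)
    also have "\<dots> = (\<Sum>d\<in>h ` (F \<times> F). \<Sum>p\<in>{p\<in>F \<times> F. h p = d}. (D (fst p) * cnj (D (snd p))) * E (h p) t)"
      by (rule sum.image_gen) (use fF in auto)
    also have "\<dots> = (\<Sum>d\<in>DS. e d * E d t)"
      unfolding e_def DS_def sum_distrib_right by (auto intro!: sum.cong)
    finally show ?thesis .
  qed
  have four: "?b t * cnj (?b t) * cnj (?b t * cnj (?b t)) = of_real ((cmod (?b t))^4)" for t
  proof -
    have "?b t * cnj (?b t) = of_real ((cmod (?b t))^2)" by (rule complex_norm_square[symmetric])
    then show ?thesis by (simp flip: of_real_mult add: power2_eq_square power4_eq_xxxx)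
  qed
  have P: "((\<lambda>t. of_real ((cmod (?b t))^4) :: complex) has_integral (\<Sum>d\<in>DS. e d * cnj (e d))) {0..1}"
    using parseval[OF fDS, of e] unfolding g[symmetric] four .
  have P': "((\<lambda>t. (cmod (?b t))^4) has_integral (\<Sum>d\<in>DS. (cmod (e d))^2)) {0..1}"
  proof -
    have "((\<lambda>t. Re (of_real ((cmod (?b t))^4))) has_integral Re (\<Sum>d\<in>DS. e d * cnj (e d))) {0..1}"
      using has_integral_linear[OF P bounded_linear_Re] by (simp add: comp_def)
    moreover have "Re (\<Sum>d\<in>DS. e d * cnj (e d)) = (\<Sum>d\<in>DS. (cmod (e d))^2)"
      by (simp add: complex_norm_square[symmetric] Re_sum)
    ultimately show ?thesis by simp
  qed
  have ca: "continuous_on {0..1} (ga A B m M N)" by (rule ga_cont[OF ta])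
  have cb: "continuous_on {0..1} ?b" using tp_cont[OF tb] continuous_on_subset by blast
  have cU: "continuous_on {0..1} (\<lambda>t. (UU A B m M N t)^2)"
    unfolding UU_def using ca cb by (intro continuous_intros)
  have "(\<Sum>d\<in>DS. (cmod (e d))^2) \<le> integral {0..1} (\<lambda>t. (UU A B m M N t)^2)"
  proof -
    have "(\<Sum>d\<in>DS. (cmod (e d))^2) = integral {0..1} (\<lambda>t. (cmod (?b t))^4)"
      using P' by (simp add: integral_unique)
    also have "\<dots> \<le> integral {0..1} (\<lambda>t. (UU A B m M N t)^2)"
    proof (rule integral_le)
      show "(\<lambda>t. (cmod (?b t))^4) integrable_on {0..1}" using P' by blast
      show "(\<lambda>t. (UU A B m M N t)^2) integrable_on {0..1}" by (rule integrable_continuous_interval[OF cU])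
      fix t
      have "(cmod (?b t))^2 \<le> UU A B m M N t" unfolding UU_def by simp
      then have "((cmod (?b t))^2)^2 \<le> (UU A B m M N t)^2"
        by (intro power_mono) auto
      then show "(cmod (?b t))^4 \<le> (UU A B m M N t)^2" by (simp add: power_mult[symmetric])
    qed
    finally show ?thesis .
  qed
  also have "\<dots> \<le> exp (8 * (\<Sum>j = M + 1..N. (cmod (B j))\<^sup>2))"
    using chain[OF m3 mpos AB, where d="N - M"] MN by simp
  finally have main: "(\<Sum>d\<in>DS. (cmod (e d))^2) \<le> exp (8 * (\<Sum>j = M + 1..N. (cmod (B j))\<^sup>2))" .
  have lhs_term: "(cmod (\<Sum>(n1, n2) \<in> {(n1, n2). n1 \<in> F \<and> n2 \<in> F \<and> n2 - n1 = n}. D n1 * cnj (D n2)))\<^sup>2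
      = (cmod (e (- n)))^2" for n
  proof -
    have "{(n1, n2). n1 \<in> F \<and> n2 \<in> F \<and> n2 - n1 = n} = {p\<in>F \<times> F. h p = - n}"
      unfolding h_def by auto
    then show ?thesis unfolding e_def by (simp add: case_prod_beta)
  qed
  have zero: "e d = 0" if "d \<notin> DS" for d
  proof -
    have emp: "{p\<in>F \<times> F. h p = d} = {}" using that unfolding DS_def by auto
    show ?thesis unfolding e_def emp by simp
  qed
  have "(\<Sum>\<^sub>\<infinity> n::int. (cmod (\<Sum>(n1, n2) \<in> {(n1, n2). n1 \<in> F \<and> n2 \<in> F \<and> n2 - n1 = n}.
              D n1 * cnj (D n2)))\<^sup>2) = (\<Sum>\<^sub>\<infinity> n\<in>uminus ` DS. (cmod (e (- n)))^2)"
  proof -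
    have neg: "x \<in> uminus ` DS" if "- x \<in> DS" for x
      by (rule image_eqI[of _ _ "- x"]) (use that in auto)
    show ?thesis unfolding lhs_term by (rule infsum_cong_neutral) (auto intro!: zero dest: neg)
  qed
  also have "\<dots> = (\<Sum>n\<in>uminus ` DS. (cmod (e (- n)))^2)"
    using fDS by simp
  also have "\<dots> = (\<Sum>d\<in>DS. (cmod (e d))^2)"
    by (subst sum.reindex) (auto simp: inj_on_def)
  finally show ?thesis using main by simp
qed


end
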